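(* Let $\alpha,\beta$ be real with $4\alpha-\beta^2>0$, and let $\Omega\subseteq\mathbb{R}^2$ be an open connected set. Suppose $f_n:\Omega\to\mathbb{C}(\alpha,\beta)$, $n\geq0$, are holomorphic and the sequence $(f_n)$ converges to a function $f$, uniformly on every compact subset of $\Omega$. Then $f$ is holomorphic in $\Omega$.
   Context: $\mathbb{C}(\alpha,\beta)$ denotes the real algebra of numbers $z=x+iy$ with $i^2=-\alpha-\beta i$ (product $(x_1+iy_1)(x_2+iy_2)=(x_1x_2-\alpha y_1y_2)+i(x_1y_2+x_2y_1-\beta y_1y_2)$), identified with $\mathbb{R}^2$ and carrying the Euclidean topology. A function $f=u+iv$ on $\Omega$ ($u,v$ real, continuously differentiable) is holomorphic if $\partial_{\bar z}f:=\tfrac12(\partial_xf+i\partial_yf)=0$, i.e. $\partial_xu-\alpha\partial_yv=0$ and $\partial_yu+\partial_xv-\beta\partial_yv=0$. *)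

theory Defs
  imports "HOL-Analysis.Analysis"
begin

text \<open>Elements x + i y of C(alpha,beta) are represented as pairs (x, y) :: real \<times> real,
  i.e. the algebra is identified with R^2 carrying the Euclidean topology.
  A function f = u + i v on Omega is given as f :: real \<times> real \<Rightarrow> real \<times> real
  with u = fst o f and v = snd o f.\<close>

definition cab_mult :: "real \<Rightarrow> real \<Rightarrow> real \<times> real \<Rightarrow> real \<times> real \<Rightarrow> real \<times> real" where
  "cab_mult \<alpha> \<beta> z w =
     (fst z * fst w - \<alpha> * snd z * snd w,
      fst z * snd w + fst w * snd z - \<beta> * snd z * snd w)"

text \<open>Holomorphic in the sense of C(alpha,beta): u, v continuously differentiable on Omega
  (differentiable at each point with continuous partial derivatives) and
  u_x - alpha v_y = 0, u_y + v_x - beta v_y = 0.  Partial derivatives are the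
  Frechet derivative applied to (1,0) resp. (0,1).\<close>

definition cab_holomorphic_on ::
  "real \<Rightarrow> real \<Rightarrow> (real \<times> real) set \<Rightarrow> (real \<times> real \<Rightarrow> real \<times> real) \<Rightarrow> bool" where
  "cab_holomorphic_on \<alpha> \<beta> \<Omega> f \<longleftrightarrow>
     (\<exists>u' v'.
        (\<forall>z\<in>\<Omega>. ((\<lambda>p. fst (f p)) has_derivative u' z) (at z) \<and>
                  ((\<lambda>p. snd (f p)) has_derivative v' z) (at z)) \<and>
        continuous_on \<Omega> (\<lambda>z. u' z (1, 0)) \<and> continuous_on \<Omega> (\<lambda>z. u' z (0, 1)) \<and>
        continuous_on \<Omega> (\<lambda>z. v' z (1, 0)) \<and> continuous_on \<Omega> (\<lambda>z. v' z (0, 1)) \<and>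
        (\<forall>z\<in>\<Omega>. u' z (1, 0) - \<alpha> * v' z (0, 1) = 0 \<and>
                  u' z (0, 1) + v' z (1, 0) - \<beta> * v' z (0, 1) = 0))"

end

theory Submission
  imports Defs "HOL-Complex_Analysis.Complex_Analysis"
begin

definition PP :: "real \<Rightarrow> real \<Rightarrow> complex \<Rightarrow> real \<times> real" where
  "PP a b w = (Re w + a * Im w, b * Im w)"
definition QQ :: "real \<Rightarrow> real \<Rightarrow> real \<times> real \<Rightarrow> complex" where
  "QQ be g p = Complex (fst p - be/2 * snd p) (g * snd p)"
definition PPi :: "real \<Rightarrow> real \<Rightarrow> real \<times> real \<Rightarrow> complex" where
  "PPi a b p = Complex (fst p - a/b * snd p) (snd p / b)"
definition QQi :: "real \<Rightarrow> real \<Rightarrow> complex \<Rightarrow> real \<times> real" where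
  "QQi be g w = (Re w + be/(2*g) * Im w, Im w / g)"

lemma PP_PPi: "b \<noteq> 0 \<Longrightarrow> PP a b (PPi a b p) = p"
  by (cases p) (simp add: PP_def PPi_def field_simps)
lemma PPi_PP: "b \<noteq> 0 \<Longrightarrow> PPi a b (PP a b w) = w"
  by (simp add: PP_def PPi_def field_simps complex_eq_iff)
lemma QQi_QQ: "g \<noteq> 0 \<Longrightarrow> QQi be g (QQ be g p) = p"
  by (cases p) (simp add: QQ_def QQi_def field_simps)

lemma bl_PP: "bounded_linear (PP a b)"
  unfolding PP_def by (intro bounded_linear_Pair bounded_linear_add bounded_linear_Re bounded_linear_const_mult bounded_linear_Im)
lemma bl_QQ: "bounded_linear (QQ be g)"
proof -
  have "QQ be g = (\<lambda>p. of_real (fst p - be/2 * snd p) + \<i> * of_real (g * snd p))"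
    by (auto simp: QQ_def complex_eq_iff)
  moreover have "bounded_linear \<dots>"
    by (intro bounded_linear_add bounded_linear_compose[OF bounded_linear_of_real] bounded_linear_mult_right bounded_linear_sub bounded_linear_fst bounded_linear_const_mult bounded_linear_snd)
  ultimately show ?thesis by simp
qed

lemma lin2: "linear (L :: real \<times> real \<Rightarrow> real) \<Longrightarrow> L (x,y) = x * L (1,0) + y * L (0,1)"
proof -
  assume l: "linear L"
  have "(x,y) = x *\<^sub>R (1,0) + y *\<^sub>R (0,1)" by simp
  then have "L (x,y) = L (x *\<^sub>R (1,0) + y *\<^sub>R (0,1))" by simp
  also have "\<dots> = x *\<^sub>R L (1,0) + y *\<^sub>R L (0,1)" by (simp only: linear_add[OF l] linear_scale[OF l])
  also have "\<dots> = x * L (1,0) + y * L (0,1)" by simp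
  finally show ?thesis .
qed


lemma alg_core: fixes x y p q a b \<alpha> \<beta> \<gamma> :: real
 assumes "a*\<alpha> + b*\<beta>/2 = 0" "-b - a*\<beta>/2 = -\<gamma>" "\<gamma>*a = -\<beta>/2" "\<gamma>*b = \<alpha>"
 shows "(x+a*y)*(\<alpha>*q) + b*y*(\<beta>*q - p) - \<beta>/2*((x+a*y)*p + b*y*q) = (\<alpha>*q - \<beta>/2*p)*x - \<gamma>*p*y"
  and "\<gamma>*((x+a*y)*p + b*y*q) = (\<alpha>*q - \<beta>/2*p)*y + \<gamma>*p*x"
proof -
  show "(x+a*y)*(\<alpha>*q) + b*y*(\<beta>*q - p) - \<beta>/2*((x+a*y)*p + b*y*q) = (\<alpha>*q - \<beta>/2*p)*x - \<gamma>*p*y"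
  proof -
    have "(x+a*y)*(\<alpha>*q) + b*y*(\<beta>*q - p) - \<beta>/2*((x+a*y)*p + b*y*q) - ((\<alpha>*q - \<beta>/2*p)*x - \<gamma>*p*y)
      = q*y*(a*\<alpha> + b*\<beta>/2) + p*y*(-b - a*\<beta>/2 + \<gamma>)" by (simp add: algebra_simps)
    also have "\<dots> = 0" using assms(1,2) by simp
    finally show ?thesis by simp
  qed
  show "\<gamma>*((x+a*y)*p + b*y*q) = (\<alpha>*q - \<beta>/2*p)*y + \<gamma>*p*x"
    using assms by algebra
qed

lemma alg1:
  assumes "linear U" "linear V" "\<gamma> > 0" "\<alpha> > 0" "4*\<gamma>^2 = 4*\<alpha> - \<beta>^2"
    "U (1,0) - \<alpha> * V (0,1) = 0" "U (0,1) + V (1,0) - \<beta> * V (0,1) = 0"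
  shows "QQ \<beta> \<gamma> (U (PP (-\<beta>/(2*\<gamma>)) (\<alpha>/\<gamma>) k), V (PP (-\<beta>/(2*\<gamma>)) (\<alpha>/\<gamma>) k))
     = Complex (\<alpha> * V (0,1) - \<beta>/2 * V (1,0)) (\<gamma> * V (1,0)) * k"
proof -
  have u: "U (x,y) = x * (\<alpha> * V(0,1)) + y * (\<beta> * V (0,1) - V (1,0))" for x y
  proof -
    have "U (0,1) = \<beta> * V (0,1) - V (1,0)" "U (1,0) = \<alpha> * V(0,1)" using assms(6,7) by linarith+
    then show ?thesis using lin2[OF assms(1), of x y] by simp
  qed
  have v: "V (x,y) = x * V(1,0) + y * V (0,1)" for x y
    using lin2[OF assms(2), of x y] by simp
  define a where "a = -\<beta>/(2*\<gamma>)"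
  define b where "b = \<alpha>/\<gamma>"
  have h1: "a*\<alpha> + b*\<beta>/2 = 0" using assms(3) by (simp add: a_def b_def field_simps)
  have h2: "-b - a*\<beta>/2 = -\<gamma>"
  proof -
    have "-b - a*\<beta>/2 = -(4*\<alpha> - \<beta>^2)/(4*\<gamma>)" using assms(3) by (simp add: a_def b_def field_simps power2_eq_square)
    also have "\<dots> = -\<gamma>" using assms(3,5) by (simp add: power2_eq_square field_simps)
    finally show ?thesis .
  qed
  have h4: "\<gamma>*b = \<alpha>" using assms(3) by (simp add: b_def)
  have h5: "\<gamma>*a = -\<beta>/2" using assms(3) by (simp add: a_def)
  note c = alg_core[OF h1 h2 h5 h4, where x="Re k" and y="Im k" and p="V (1,0)" and q="V (0,1)"]
  show ?thesis
    unfolding a_def[symmetric] b_def[symmetric] PP_def QQ_def complex_eq_iff fst_conv snd_conv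
      u[of "Re k + a * Im k" "b * Im k"] v[of "Re k + a * Im k" "b * Im k"] times_complex.sel
      complex.sel
    using c by (simp add: algebra_simps)
qed


lemma step1:
  assumes "\<alpha> > 0" "\<gamma> > 0" "4*\<gamma>^2 = 4*\<alpha> - \<beta>^2" "open \<Omega>" "cab_holomorphic_on \<alpha> \<beta> \<Omega> h"
  shows "(\<lambda>w. QQ \<beta> \<gamma> (h (PP (-\<beta>/(2*\<gamma>)) (\<alpha>/\<gamma>) w))) holomorphic_on (PP (-\<beta>/(2*\<gamma>)) (\<alpha>/\<gamma>) -` \<Omega>)"
proof -
  let ?P = "PP (-\<beta>/(2*\<gamma>)) (\<alpha>/\<gamma>)"
  obtain u' v' where d: "\<forall>z\<in>\<Omega>. ((\<lambda>p. fst (h p)) has_derivative u' z) (at z) \<and>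
                  ((\<lambda>p. snd (h p)) has_derivative v' z) (at z)"
    and cr: "\<forall>z\<in>\<Omega>. u' z (1, 0) - \<alpha> * v' z (0, 1) = 0 \<and>
                  u' z (0, 1) + v' z (1, 0) - \<beta> * v' z (0, 1) = 0"
    using assms(5) unfolding cab_holomorphic_on_def by blast
  have op: "open (?P -` \<Omega>)"
    by (rule open_vimage[OF assms(4) linear_continuous_on[OF bl_PP]])
  show ?thesis
    unfolding holomorphic_on_open[OF op]
  proof
    fix w assume w: "w \<in> ?P -` \<Omega>"
    define z where "z = ?P w"
    have z: "z \<in> \<Omega>" using w z_def by simp
    have du: "((\<lambda>p. fst (h p)) has_derivative u' z) (at z)" and dv: "((\<lambda>p. snd (h p)) has_derivative v' z) (at z)"
      using d z by auto
    have "((\<lambda>p. (fst (h p), snd (h p))) has_derivative (\<lambda>v. (u' z v, v' z v))) (at z)"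
      by (rule has_derivative_Pair[OF du dv])
    then have dh: "(h has_derivative (\<lambda>v. (u' z v, v' z v))) (at z)" by simp
    have "((\<lambda>x. h (?P x)) has_derivative (\<lambda>k. (u' z (?P k), v' z (?P k)))) (at w)"
      using has_derivative_compose[OF bounded_linear_imp_has_derivative[OF bl_PP, of _ _ "at w"] dh[unfolded z_def]]
      by (simp add: z_def)
    from bounded_linear.has_derivative[OF bl_QQ this]
    have "((\<lambda>x. QQ \<beta> \<gamma> (h (?P x))) has_derivative (\<lambda>k. QQ \<beta> \<gamma> (u' z (?P k), v' z (?P k)))) (at w)" .
    moreover have "(\<lambda>k. QQ \<beta> \<gamma> (u' z (?P k), v' z (?P k))) = (\<lambda>k. Complex (\<alpha> * v' z (0,1) - \<beta>/2 * v' z (1,0)) (\<gamma> * v' z (1,0)) * k)"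
      using alg1[OF bounded_linear.linear[OF has_derivative_bounded_linear[OF du]]
                    bounded_linear.linear[OF has_derivative_bounded_linear[OF dv]] assms(2,1,3)] cr z
      by auto
    ultimately show "\<exists>f'. ((\<lambda>w. QQ \<beta> \<gamma> (h (?P w))) has_field_derivative f') (at w)"
      unfolding has_field_derivative_def by auto
  qed
qed


lemma alg2: fixes c :: complex
  assumes "\<alpha> > 0" "\<gamma> > 0" "4*\<gamma>^2 = 4*\<alpha> - \<beta>^2"
  defines "L \<equiv> (\<lambda>k. QQi \<beta> \<gamma> (c * PPi (-\<beta>/(2*\<gamma>)) (\<alpha>/\<gamma>) k))"
  shows "fst (L (1,0)) - \<alpha> * snd (L (0,1)) = 0" "fst (L (0,1)) + snd (L (1,0)) - \<beta> * snd (L (0,1)) = 0"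
proof -
  have a: "\<alpha> = \<gamma>^2 + \<beta>^2/4" using assms(3) by simp
  show "fst (L (1,0)) - \<alpha> * snd (L (0,1)) = 0"
    unfolding L_def QQi_def PPi_def using assms(1,2)
    by (simp add: field_simps)
  show "fst (L (0,1)) + snd (L (1,0)) - \<beta> * snd (L (0,1)) = 0"
  proof -
    have e: "\<alpha> * 4 = \<gamma>*\<gamma>*4 + \<beta>*\<beta>" using assms(3) by (simp add: power2_eq_square)
    show ?thesis unfolding L_def QQi_def PPi_def using assms(1,2)
    apply (simp add: field_simps)
    using e by algebra
  qed
qed


lemma bl_PPi: "bounded_linear (PPi a b)"
proof -
  have "PPi a b = (\<lambda>p. of_real (fst p - a/b * snd p) + \<i> * of_real (snd p / b))"
    by (auto simp: PPi_def complex_eq_iff)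
  moreover have "bounded_linear \<dots>"
    by (intro bounded_linear_add bounded_linear_compose[OF bounded_linear_of_real] bounded_linear_mult_right bounded_linear_sub bounded_linear_fst bounded_linear_const_mult bounded_linear_snd bounded_linear_compose[OF bounded_linear_divide])
  ultimately show ?thesis by simp
qed
lemma bl_QQi: "bounded_linear (QQi be g)"
  unfolding QQi_def by (intro bounded_linear_Pair bounded_linear_add bounded_linear_Re bounded_linear_const_mult bounded_linear_Im bounded_linear_compose[OF bounded_linear_divide])

lemma step4:
  assumes "\<alpha> > 0" "\<gamma> > 0" "4*\<gamma>^2 = 4*\<alpha> - \<beta>^2" "open \<Omega>"
    and hol: "(\<lambda>w. QQ \<beta> \<gamma> (f (PP (-\<beta>/(2*\<gamma>)) (\<alpha>/\<gamma>) w))) holomorphic_on (PP (-\<beta>/(2*\<gamma>)) (\<alpha>/\<gamma>) -` \<Omega>)"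
  shows "cab_holomorphic_on \<alpha> \<beta> \<Omega> f"
proof -
  let ?P = "PP (-\<beta>/(2*\<gamma>)) (\<alpha>/\<gamma>)"
  let ?Pi = "PPi (-\<beta>/(2*\<gamma>)) (\<alpha>/\<gamma>)"
  define g where "g = (\<lambda>w. QQ \<beta> \<gamma> (f (?P w)))"
  have bnz: "\<alpha>/\<gamma> \<noteq> 0" using assms(1,2) by simp
  have fe: "f = (\<lambda>p. QQi \<beta> \<gamma> (g (?Pi p)))"
    by (rule ext) (simp add: g_def PP_PPi[OF bnz] QQi_QQ assms(2)[THEN less_imp_neq, symmetric])
  have op: "open (?P -` \<Omega>)"
    by (rule open_vimage[OF assms(4) linear_continuous_on[OF bl_PP]])
  have holg: "g holomorphic_on (?P -` \<Omega>)" using hol g_def by simp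
  define L where "L = (\<lambda>z k. QQi \<beta> \<gamma> (deriv g (?Pi z) * ?Pi k))"
  have der: "(f has_derivative L z) (at z)" if z: "z \<in> \<Omega>" for z
  proof -
    have w: "?Pi z \<in> ?P -` \<Omega>" using z by (simp add: PP_PPi[OF bnz])
    have "(g has_field_derivative deriv g (?Pi z)) (at (?Pi z))"
      by (rule holomorphic_derivI[OF holg op w])
    then have dg: "(g has_derivative (\<lambda>k. deriv g (?Pi z) * k)) (at (?Pi z))"
      unfolding has_field_derivative_def by simp
    have "((\<lambda>p. g (?Pi p)) has_derivative (\<lambda>k. deriv g (?Pi z) * ?Pi k)) (at z)"
      by (rule has_derivative_compose[OF bounded_linear_imp_has_derivative[OF bl_PPi] dg])
    from bounded_linear.has_derivative[OF bl_QQi this]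
    show ?thesis unfolding L_def fe[symmetric] by (subst fe) simp
  qed
  have cd: "continuous_on (?P -` \<Omega>) (deriv g)"
    by (rule holomorphic_on_imp_continuous_on[OF holomorphic_deriv[OF holg op]])
  have cd2: "continuous_on \<Omega> (\<lambda>z. deriv g (?Pi z))"
    by (rule continuous_on_compose2[OF cd linear_continuous_on[OF bl_PPi]]) (auto simp: PP_PPi[OF bnz])
  define c where "c = (\<lambda>z. deriv g (?Pi z))"
  have cd3: "continuous_on \<Omega> c" using cd2 c_def by simp
  have Lc: "L = (\<lambda>z k. QQi \<beta> \<gamma> (c z * ?Pi k))" by (simp add: L_def c_def)
  have cL: "continuous_on \<Omega> (\<lambda>z. fst (L z k))" "continuous_on \<Omega> (\<lambda>z. snd (L z k))" for k
    unfolding Lc QQi_def fst_conv snd_conv using cd3 assms(2) by (auto intro!: continuous_intros)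
  have D: "\<forall>z\<in>\<Omega>. ((\<lambda>p. fst (f p)) has_derivative (\<lambda>k. fst (L z k))) (at z) \<and>
       ((\<lambda>p. snd (f p)) has_derivative (\<lambda>k. snd (L z k))) (at z)"
    using der by (auto intro: has_derivative_fst has_derivative_snd)
  have E: "\<forall>z\<in>\<Omega>. fst (L z (1,0)) - \<alpha> * snd (L z (0,1)) = 0 \<and>
       fst (L z (0,1)) + snd (L z (1,0)) - \<beta> * snd (L z (0,1)) = 0"
    using alg2[OF assms(1,2,3)] unfolding L_def by blast
  show ?thesis
    unfolding cab_holomorphic_on_def
    apply (rule exI[of _ "\<lambda>z k. fst (L z k)"], rule exI[of _ "\<lambda>z k. snd (L z k)"])
    using D E cL[of "(1,0)"] cL[of "(0,1)"] by blast
qed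


theorem theorem1:
  fixes \<alpha> \<beta> :: real
    and \<Omega> :: "(real \<times> real) set"
    and fs :: "nat \<Rightarrow> real \<times> real \<Rightarrow> real \<times> real"
    and f :: "real \<times> real \<Rightarrow> real \<times> real"
  assumes "4 * \<alpha> - \<beta>^2 > 0"
    and "open \<Omega>" and "connected \<Omega>"
    and "\<And>n. cab_holomorphic_on \<alpha> \<beta> \<Omega> (fs n)"
    and "\<And>K. compact K \<Longrightarrow> K \<subseteq> \<Omega> \<Longrightarrow> uniform_limit K fs f sequentially"
  shows "cab_holomorphic_on \<alpha> \<beta> \<Omega> f"
proof -
  define \<gamma> where "\<gamma> = sqrt (4 * \<alpha> - \<beta>^2) / 2"
  have g0: "\<gamma> > 0" using assms(1) by (simp add: \<gamma>_def)
  have g2: "4*\<gamma>^2 = 4*\<alpha> - \<beta>^2" using assms(1) by (simp add: \<gamma>_def power_divide)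
  have a0: "\<alpha> > 0"
  proof -
    have "\<beta>^2 \<ge> 0" by simp
    then show ?thesis using assms(1) by linarith
  qed
  let ?P = "PP (-\<beta>/(2*\<gamma>)) (\<alpha>/\<gamma>)"
  define G where "G = (\<lambda>n w. QQ \<beta> \<gamma> (fs n (?P w)))"
  define g where "g = (\<lambda>w. QQ \<beta> \<gamma> (f (?P w)))"
  have op: "open (?P -` \<Omega>)"
    by (rule open_vimage[OF assms(2) linear_continuous_on[OF bl_PP]])
  have hG: "G n holomorphic_on (?P -` \<Omega>)" for n
    unfolding G_def by (rule step1[OF a0 g0 g2 assms(2,4)])
  have "g holomorphic_on (?P -` \<Omega>)"
    unfolding holomorphic_on_open[OF op]
  proof
    fix w assume w: "w \<in> ?P -` \<Omega>"
    obtain r where r: "r > 0" "cball w r \<subseteq> ?P -` \<Omega>"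
      using op w open_contains_cball by blast
    have K: "compact (?P ` cball w r)"
      by (rule compact_continuous_image[OF linear_continuous_on[OF bl_PP] compact_cball])
    have Ks: "?P ` cball w r \<subseteq> \<Omega>" using r by auto
    have "uniform_limit (cball w r) (\<lambda>n x. fs n (?P x)) (\<lambda>x. f (?P x)) sequentially"
      by (rule uniform_limit_compose'[OF assms(5)[OF K Ks]]) auto
    from bounded_linear.uniform_limit[OF bl_QQ this]
    have ul: "uniform_limit (cball w r) G g sequentially"
      unfolding G_def g_def .
    have ev: "eventually (\<lambda>n. continuous_on (cball w r) (G n) \<and> G n holomorphic_on ball w r) sequentially"
      using hG r holomorphic_on_subset[OF hG] holomorphic_on_imp_continuous_on
      by (auto intro!: always_eventually) (meson ball_subset_cball holomorphic_on_subset order_trans)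
    obtain "g holomorphic_on ball w r"
      using holomorphic_uniform_limit[OF ev ul] by auto
    then show "\<exists>f'. (g has_field_derivative f') (at w)"
      using holomorphic_on_open[OF open_ball] r(1) by auto
  qed
  then show ?thesis
    unfolding g_def by (rule step4[OF a0 g0 g2 assms(2)])
qed

end
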